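(* Let $G=K_n$ and let $F(v)=1-e^{-v}$ ($v\ge0$) be the exponential distribution (which is regular with virtual value $\phi(v)=v-1$ and Myerson reserve price $1$). Then: (i) for every price $p>0$, every equilibrium in $\mathcal{N}_{p\cdot\mathbf{1}}$ is symmetric, i.e. of the form $T\cdot\mathbf{1}$ with $T\,F(T)^{n-1}=p$, and this $T$ is unique; (ii) for all sufficiently large $n$, the equilibrium revenue at price $1$ is less than $2\log\log n$, while at price $p=(\log n)(1-1/n)^{n-1}$ the equilibrium threshold is $\log n$ and the revenue equals $p>\tfrac14\log n$. Hence the uniform price equal to the Myerson reserve price can lose a factor $\Omega(\log n/\log\log n)$ relative to the best uniform price.
   Context: Public-goods pricing game on the complete graph $K_n$: buyer $i$'s neighbours are all $j\neq i$. Values i.i.d. with cumulative distribution function $F$, $F(\infty)=1$. An equilibrium for price vector $\mathbf{p}$ is $\mathbf{T}\in[0,\infty]^n$ (buyer $i$ purchases iff $v_i\ge T_i$) with $T_i=p_i/\prod_{j\neq i}F(T_j)$ for all $i$; $\mathcal{N}_{\mathbf{p}}$ is the set of equilibria; $\mathcal{R}(\mathbf{p},\mathbf{T})=\sum_ip_i(1-F(T_i))$; $p\cdot\mathbf{1}$ is the uniform price vector; $\log$ is the natural logarithm. *)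

theory Defs
  imports "HOL-Analysis.Analysis"
begin

definition expF :: "ereal \<Rightarrow> real" where
  "expF v = (case v of ereal x \<Rightarrow> (if 0 \<le> x then 1 - exp (- x) else 0)
                     | PInfty \<Rightarrow> 1 | MInfty \<Rightarrow> 0)"

text \<open>Equilibrium on the complete graph K_n (buyers 0..n-1) for price vector p:
  T_i \<in> [0,\<infinity>] and T_i = p_i / prod_{j \<noteq> i} F(T_j), with the convention p_i/0 = \<infinity>
  (p_i > 0 in all uses below).\<close>
definition is_equilibrium :: "nat \<Rightarrow> (nat \<Rightarrow> real) \<Rightarrow> (nat \<Rightarrow> ereal) \<Rightarrow> bool" where
  "is_equilibrium n p T \<longleftrightarrow>
     (\<forall>i<n. 0 \<le> T i \<and>
        T i = (let q = (\<Prod>j\<in>{..<n} - {i}. expF (T j))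
               in if q = 0 then \<infinity> else ereal (p i / q)))"

definition revenue :: "nat \<Rightarrow> (nat \<Rightarrow> real) \<Rightarrow> (nat \<Rightarrow> ereal) \<Rightarrow> real" where
  "revenue n p T = (\<Sum>i<n. p i * (1 - expF (T i)))"

end

theory Submission imports Defs begin

lemma exp_strict: "(x::real) > 0 \<Longrightarrow> 1 + x < exp x"
proof -
  assume x: "x > 0"
  have "exp x = exp (x/2) ^ 2" by (simp flip: exp_of_nat_mult)
  also have "\<dots> \<ge> (1 + x/2) ^ 2"
    using exp_ge_add_one_self[of "x/2"] x by (intro power_mono) auto
  finally have e: "(1 + x/2)^2 \<le> exp x" .
  have "(1 + x/2)^2 = 1 + x + x^2/4" by (simp add: power2_eq_square field_simps)
  moreover have "x^2 > 0" using x by simp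
  ultimately show ?thesis using e by linarith
qed

lemma g_mono:
  fixes s t :: real
  assumes "0 \<le> s" "s < t"
  shows "s * (1 - exp (- s)) ^ k < t * (1 - exp (- t)) ^ k"
proof -
  have b: "0 < 1 - exp (- t)" using assms by simp
  have a: "0 \<le> 1 - exp (- s)" "1 - exp (- s) \<le> 1 - exp (- t)" using assms by auto
  have "(1 - exp (- s)) ^ k \<le> (1 - exp (- t)) ^ k" by (rule power_mono[OF a(2) a(1)])
  hence "s * (1 - exp (- s)) ^ k \<le> s * (1 - exp (- t)) ^ k" using assms by (simp add: mult_left_mono)
  also have "\<dots> < t * (1 - exp (- t)) ^ k" using b assms by simp
  finally show ?thesis .
qed

lemma g_exists:
  fixes p :: real
  assumes p: "0 < p"
  shows "\<exists>t\<ge>0. t * (1 - exp (- t)) ^ k = p"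
proof -
  define M where "M = 2*p + 2*real k + 2"
  have M0: "0 \<le> M" using p by (simp add: M_def)
  have "1 + M \<le> exp M" by simp
  hence "2 * real k \<le> exp M" using p by (simp add: M_def)
  hence "real k * exp (- M) \<le> 1/2"
    by (simp add: exp_minus field_simps)
  moreover have "1 + real k * (- exp (- M)) \<le> (1 + (- exp (- M))) ^ k"
    by (rule Bernoulli_inequality) (simp add: M0)
  ultimately have "1/2 \<le> (1 - exp (- M)) ^ k" by simp
  hence "M * (1/2) \<le> M * (1 - exp (- M)) ^ k" by (rule mult_left_mono[OF _ M0])
  hence hM: "p \<le> M * (1 - exp (- M)) ^ k" by (simp add: M_def)
  have h0: "0 * (1 - exp (- 0)) ^ k \<le> p" using p by simp
  have "\<exists>x. 0 \<le> x \<and> x \<le> M \<and> x * (1 - exp (- x)) ^ k = p"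
    by (rule IVT[of "\<lambda>x. x * (1 - exp (- x)) ^ k", OF h0 hM M0]) (auto intro!: continuous_intros)
  thus ?thesis by blast
qed

lemma h_mono:
  fixes x y :: real
  assumes "0 < x" "x < y"
  shows "x / (1 - exp (- x)) < y / (1 - exp (- y))"
proof (rule DERIV_pos_imp_increasing[OF assms(2)])
  fix z :: real assume z: "x \<le> z" "z \<le> y"
  hence z0: "0 < z" using assms by simp
  have d: "1 - exp (- z) > 0" using z0 by simp
  have "DERIV (\<lambda>z. z / (1 - exp (- z))) z :> ((1 - exp (- z)) - z * exp (- z)) / (1 - exp (- z))^2"
    using d by (auto intro!: derivative_eq_intros simp: power2_eq_square field_simps)
  moreover have "(1 - exp (- z)) - z * exp (- z) > 0"
  proof -
    have "1 + z < exp z" using exp_strict z0 by simp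
    hence "exp (-z) * (1 + z) < exp (-z) * exp z" by simp
    thus ?thesis by (simp add: exp_minus_inverse algebra_simps)
  qed
  ultimately show "\<exists>d. DERIV (\<lambda>z. z / (1 - exp (- z))) z :> d \<and> 0 < d" using d by auto
qed

lemma expF_nonneg: "expF v \<ge> 0"
  by (cases v) (auto simp: expF_def)

lemma expF_ereal: "0 \<le> x \<Longrightarrow> expF (ereal x) = 1 - exp (- x)"
  by (simp add: expF_def)

lemma eq_sym:
  assumes n: "n \<ge> 1" and p: "p > 0" and E: "is_equilibrium n (\<lambda>_. p) T"
  shows "\<exists>s>0. s * (1 - exp (- s)) ^ (n - 1) = p \<and> (\<forall>i<n. T i = ereal s)"
proof -
  define q where "q i = (\<Prod>j\<in>{..<n} - {i}. expF (T j))" for i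
  have Ti: "0 \<le> T i \<and> T i = (if q i = 0 then \<infinity> else ereal (p / q i))" if "i < n" for i
  proof -
    have "0 \<le> T i \<and> T i = (let q = (\<Prod>j\<in>{..<n} - {i}. expF (T j))
               in if q = 0 then \<infinity> else ereal (p / q))"
      using E that unfolding is_equilibrium_def by blast
    thus ?thesis unfolding q_def Let_def by assumption
  qed
  have q0: "\<And>i. q i \<ge> 0" unfolding q_def by (intro prod_nonneg) (simp add: expF_nonneg)
  have pos: "expF (T j) > 0" if j: "j < n" for j
  proof (cases "q j = 0")
    case True thus ?thesis using Ti[OF j] by (simp add: expF_def)
  next
    case False
    hence "q j > 0" using q0[of j] by simp
    hence "p / q j > 0" using p by simp
    thus ?thesis using Ti[OF j] False by (simp add: expF_def)
  qed
  have qpos: "q i > 0" for i unfolding q_def by (intro prod_pos) (auto intro: pos)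
  define x where "x i = p / q i" for i
  have xpos: "x i > 0" for i using qpos p by (simp add: x_def)
  have Tx: "T i = ereal (x i)" if "i < n" for i using Ti[OF that] qpos[of i] by (simp add: x_def)
  have FT: "expF (T i) = 1 - exp (- x i)" if "i < n" for i
    using Tx[OF that] xpos[of i] by (simp add: expF_def)
  have qx: "q i = (\<Prod>j\<in>{..<n} - {i}. 1 - exp (- x j))" for i
    unfolding q_def by (intro prod.cong) (auto simp: FT)
  define P where "P = (\<Prod>j<n. 1 - exp (- x j))"
  have Pi: "P = (1 - exp (- x i)) * q i" if "i < n" for i
    unfolding P_def qx using that by (simp add: prod.remove)
  have xq: "x i * q i = p" for i using qpos[of i] by (simp add: x_def)
  have fpos: "1 - exp (- x i) > 0" for i using xpos[of i] by simp
  have hx: "x i / (1 - exp (- x i)) = p / P" if "i < n" for i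
  proof -
    have "p / P = (x i * q i) / ((1 - exp (- x i)) * q i)" using Pi[OF that] xq[of i] by simp
    also have "\<dots> = x i / (1 - exp (- x i))" using qpos[of i] by simp
    finally show ?thesis by simp
  qed
  have n0: "0 < n" using n by simp
  have same: "x i = x 0" if "i < n" for i
  proof (rule ccontr)
    assume "x i \<noteq> x 0"
    hence "x i < x 0 \<or> x 0 < x i" by linarith
    thus False
    proof
      assume "x i < x 0"
      from h_mono[OF xpos this] show False using hx[OF that] hx[OF n0] by simp
    next
      assume "x 0 < x i"
      from h_mono[OF xpos this] show False using hx[OF that] hx[OF n0] by simp
    qed
  qed
  have card: "card ({..<n} - {0}) = n - 1" using n0 by simp
  have "q 0 = (\<Prod>j\<in>{..<n} - {0}. 1 - exp (- x 0))" unfolding qx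
  proof (rule prod.cong)
    fix j assume "j \<in> {..<n} - {0}"
    hence "x j = x 0" using same by blast
    thus "1 - exp (- x j) = 1 - exp (- x 0)" by simp
  qed simp
  also have "\<dots> = (1 - exp (- x 0)) ^ (n - 1)" using card by simp
  finally have "q 0 = (1 - exp (- x 0)) ^ (n - 1)" .
  hence "x 0 * (1 - exp (- x 0)) ^ (n - 1) = p" using xq[of 0] by simp
  moreover have "\<forall>i<n. T i = ereal (x 0)"
  proof (intro allI impI)
    fix i assume "i < n"
    thus "T i = ereal (x 0)" using Tx[of i] same[of i] by metis
  qed
  ultimately show ?thesis using xpos[of 0] by blast
qed

lemma uniq:
  assumes n: "n \<ge> 1" and p: "p > 0" and t: "t \<ge> 0" "t * (1 - exp (- t)) ^ (n - 1) = p"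
    and E: "is_equilibrium n (\<lambda>_. p) T"
  shows "\<forall>i<n. T i = ereal t"
proof -
  obtain s where s: "s > 0" "s * (1 - exp (- s)) ^ (n - 1) = p" "\<forall>i<n. T i = ereal s"
    using eq_sym[OF n p E] by blast
  have "s = t"
  proof (rule ccontr)
    assume "s \<noteq> t"
    hence "s < t \<or> t < s" by linarith
    thus False using g_mono[of s t "n-1"] g_mono[of t s "n-1"] s t by auto
  qed
  thus ?thesis using s by simp
qed

lemma rev_sym:
  assumes "\<forall>i<n. T i = ereal t" "t \<ge> 0"
  shows "revenue n (\<lambda>_. p) T = real n * p * exp (- t)"
proof -
  have "revenue n (\<lambda>_. p) T = (\<Sum>i<n. p * exp (- t))"
    unfolding revenue_def using assms by (intro sum.cong) (auto simp: expF_def)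
  thus ?thesis by simp
qed

lemma part1:
  assumes n: "n \<ge> 1" and p: "p > 0"
  shows "\<exists>t::real. t \<ge> 0 \<and> t * (1 - exp (- t)) ^ (n - 1) = p
               \<and> (\<forall>s::real. s \<ge> 0 \<and> s * (1 - exp (- s)) ^ (n - 1) = p \<longrightarrow> s = t)
               \<and> (\<forall>T. is_equilibrium n (\<lambda>_. p) T \<longrightarrow> (\<forall>i<n. T i = ereal t))"
proof -
  obtain t where t: "t \<ge> 0" "t * (1 - exp (- t)) ^ (n - 1) = p" using g_exists[OF p] by blast
  have u: "\<forall>s::real. s \<ge> 0 \<and> s * (1 - exp (- s)) ^ (n - 1) = p \<longrightarrow> s = t"
  proof (intro allI impI)
    fix s :: real assume s: "s \<ge> 0 \<and> s * (1 - exp (- s)) ^ (n - 1) = p"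
    show "s = t"
    proof (rule ccontr)
      assume "s \<noteq> t"
      hence "s < t \<or> t < s" by linarith
      thus False using g_mono[of s t "n-1"] g_mono[of t s "n-1"] s t by auto
    qed
  qed
  show ?thesis using t u uniq[OF n p t] by blast
qed

lemma part2a:
  assumes N: "real n \<ge> exp (exp 1)" and n3: "n \<ge> 3" and E: "is_equilibrium n (\<lambda>_. 1) T"
  shows "revenue n (\<lambda>_. 1) T < 2 * ln (ln (real n))"
proof -
  define L where "L = ln (real n)"
  have n0: "real n > 0" using n3 by simp
  have "ln (exp (exp 1)) \<le> L" unfolding L_def using N n3 by (subst ln_le_cancel_iff) auto
  hence L1: "exp 1 \<le> L" by simp
  hence Lpos: "L > 0" by (smt (verit) exp_gt_zero)
  have "ln (exp 1) \<le> ln L" using L1 Lpos by (subst ln_le_cancel_iff) auto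
  hence lL: "1 \<le> ln L" by simp
  obtain t where t: "t \<ge> 0" "t * (1 - exp (- t)) ^ (n - 1) = 1" "\<forall>i<n. T i = ereal t"
    using part1[of n 1] n3 E by auto
  have rev: "revenue n (\<lambda>_. 1) T = real n * exp (- t)" using rev_sym[OF t(3) t(1), of 1] by simp
  show ?thesis unfolding rev L_def[symmetric]
  proof (rule ccontr)
    assume "\<not> real n * exp (- t) < 2 * ln L"
    hence ge: "2 * ln L \<le> real n * exp (- t)" by simp
    define c where "c = 2 * ln L / real n"
    have ce: "c \<le> exp (- t)" unfolding c_def using ge n0 by (simp add: divide_le_eq mult.commute)
    have "1 / real n \<le> c" unfolding c_def using lL n0 by (intro divide_right_mono) auto
    moreover have "exp (- L) = 1 / real n" unfolding L_def using n0 by (simp add: exp_minus inverse_eq_divide)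
    ultimately have "exp (- L) \<le> exp (- t)" using ce by simp
    hence tL: "t \<le> L" by simp
    have f0: "0 \<le> 1 - exp (- t)" using t(1) by simp
    have f1: "1 - exp (- t) \<le> 1 - c" using ce by simp
    have "(1 - exp (- t)) ^ (n - 1) \<le> (1 - c) ^ (n - 1)" by (rule power_mono[OF f1 f0])
    also have "\<dots> \<le> exp (- c) ^ (n - 1)"
    proof (rule power_mono)
      show "0 \<le> 1 - c" using f0 f1 by linarith
    qed (use exp_ge_add_one_self[of "- c"] in simp)
    also have "\<dots> = exp (real (n - 1) * (- c))" by (rule exp_of_nat_mult[symmetric])
    finally have A: "(1 - exp (- t)) ^ (n - 1) \<le> exp (real (n - 1) * (- c))" .
    have "1 = t * (1 - exp (- t)) ^ (n - 1)" using t(2) by simp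
    also have "\<dots> \<le> L * exp (real (n - 1) * (- c))"
      using tL A Lpos f0 by (intro mult_mono) auto
    also have "\<dots> < 1"
    proof -
      have rn: "real (n - 1) = real n - 1" using n3 by (simp add: of_nat_diff)
      have "real (n - 1) * c - ln L = ln L * (real n - 2) / real n"
        unfolding c_def rn using n0 by (simp add: field_simps)
      moreover have "ln L * (real n - 2) / real n > 0" using lL n3 n0 by (intro divide_pos_pos mult_pos_pos) auto
      ultimately have "real (n - 1) * (- c) < - ln L" by simp
      hence "exp (real (n - 1) * (- c)) < exp (- ln L)" by simp
      also have "\<dots> = 1 / L" using Lpos by (simp add: exp_minus inverse_eq_divide)
      finally show ?thesis using Lpos by (simp add: field_simps)
    qed
    finally show False by simp
  qed
qed

lemma part2b:
  assumes n2: "n \<ge> 2"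
  shows "let p = ln (real n) * (1 - 1 / real n) ^ (n - 1) in
            (\<forall>T. is_equilibrium n (\<lambda>_. p) T \<longrightarrow>
                 (\<forall>i<n. T i = ereal (ln (real n))) \<and> revenue n (\<lambda>_. p) T = p)
            \<and> p > ln (real n) / 4"
proof -
  define L where "L = ln (real n)"
  define p where "p = L * (1 - 1 / real n) ^ (n - 1)"
  have n0: "real n > 1" using n2 by simp
  have Lpos: "L > 0" unfolding L_def using n0 by simp
  have eL: "exp (- L) = 1 / real n" unfolding L_def using n0 by (simp add: exp_minus inverse_eq_divide)
  have A0: "(1 - 1 / real n) ^ (n - 1) > 0" using n0 by simp
  have ppos: "p > 0" unfolding p_def using Lpos A0 by simp
  have gL: "L * (1 - exp (- L)) ^ (n - 1) = p" unfolding p_def eL by simp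
  have c1: "\<forall>T. is_equilibrium n (\<lambda>_. p) T \<longrightarrow> (\<forall>i<n. T i = ereal L) \<and> revenue n (\<lambda>_. p) T = p"
  proof (intro allI impI)
    fix T assume E: "is_equilibrium n (\<lambda>_. p) T"
    have Ti: "\<forall>i<n. T i = ereal L" using uniq[of n p L T] n2 ppos Lpos gL E by auto
    have "revenue n (\<lambda>_. p) T = real n * p * exp (- L)" using rev_sym[OF Ti] Lpos by simp
    also have "\<dots> = p" unfolding eL using n0 by simp
    finally show "(\<forall>i<n. T i = ereal L) \<and> revenue n (\<lambda>_. p) T = p" using Ti by simp
  qed
  define m where "m = n - 1"
  have rm: "real m = real n - 1" unfolding m_def using n2 by (simp add: of_nat_diff)
  have m0: "real m > 0" using rm n0 by simp
  have "(1 + 1 / real m) ^ m \<le> exp (1 / real m) ^ m"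
    using m0 exp_ge_add_one_self[of "1 / real m"] by (intro power_mono) auto
  also have "\<dots> = exp (real m * (1 / real m))" by (rule exp_of_nat_mult[symmetric])
  also have "\<dots> = exp 1"
  proof -
    have mm: "real m * (1 / real m) = 1" using m0 by simp
    show ?thesis unfolding mm by simp
  qed
  finally have B: "(1 + 1 / real m) ^ m \<le> exp 1" .
  have "(1 - 1 / real n) * (1 + 1 / real m) = 1" unfolding rm using n0 by (simp add: field_simps)
  hence AB: "(1 - 1 / real n) ^ m * (1 + 1 / real m) ^ m = 1" by (metis power_mult_distrib power_one)
  have "exp 1 < (4::real)" using e_less_272 by simp
  hence "(1 + 1 / real m) ^ m < 4" using B by simp
  hence "(1 - 1 / real n) ^ m * (1 + 1 / real m) ^ m < (1 - 1 / real n) ^ m * 4"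
    using A0 unfolding m_def by (intro mult_strict_left_mono) auto
  hence a4: "1 < (1 - 1 / real n) ^ m * 4" using AB by simp
  have "L * 1 < L * ((1 - 1 / real n) ^ m * 4)" using Lpos a4 by (intro mult_strict_left_mono)
  hence "p > L / 4" unfolding p_def m_def by simp
  thus ?thesis using c1 unfolding L_def p_def Let_def by simp
qed

lemma evN: "\<forall>\<^sub>F n in sequentially. real n \<ge> exp (exp 1) \<and> n \<ge> 3"
proof -
  have "\<forall>\<^sub>F n in sequentially. n \<ge> nat \<lceil>exp (exp (1::real))\<rceil> + 3" by (rule eventually_ge_at_top)
  thus ?thesis
  proof (rule eventually_mono)
    fix n :: nat assume "n \<ge> nat \<lceil>exp (exp (1::real))\<rceil> + 3"
    moreover have "exp (exp (1::real)) \<le> real (nat \<lceil>exp (exp (1::real))\<rceil>)" by (rule real_nat_ceiling_ge)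
    ultimately show "real n \<ge> exp (exp 1) \<and> n \<ge> 3" by linarith
  qed
qed

theorem mainTheorem15:
  shows "(\<forall>n::nat. \<forall>p::real. n \<ge> 1 \<and> p > 0 \<longrightarrow>
            (\<exists>t::real. t \<ge> 0 \<and> t * (1 - exp (- t)) ^ (n - 1) = p
               \<and> (\<forall>s::real. s \<ge> 0 \<and> s * (1 - exp (- s)) ^ (n - 1) = p \<longrightarrow> s = t)
               \<and> (\<forall>T. is_equilibrium n (\<lambda>_. p) T \<longrightarrow> (\<forall>i<n. T i = ereal t))))
   \<and> (\<forall>\<^sub>F n in sequentially.
         (\<forall>T. is_equilibrium n (\<lambda>_. 1) T \<longrightarrow>
              revenue n (\<lambda>_. 1) T < 2 * ln (ln (real n)))
       \<and> (let p = ln (real n) * (1 - 1 / real n) ^ (n - 1) in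
            (\<forall>T. is_equilibrium n (\<lambda>_. p) T \<longrightarrow>
                 (\<forall>i<n. T i = ereal (ln (real n))) \<and> revenue n (\<lambda>_. p) T = p)
            \<and> p > ln (real n) / 4))
   \<and> (\<exists>c>0. \<forall>\<^sub>F n in sequentially.
         \<forall>T1 T2. is_equilibrium n (\<lambda>_. 1) T1 \<longrightarrow>
           is_equilibrium n (\<lambda>_. ln (real n) * (1 - 1 / real n) ^ (n - 1)) T2 \<longrightarrow>
           revenue n (\<lambda>_. ln (real n) * (1 - 1 / real n) ^ (n - 1)) T2
             \<ge> c * (ln (real n) / ln (ln (real n))) * revenue n (\<lambda>_. 1) T1)"
proof (intro conjI)
  show "\<forall>n::nat. \<forall>p::real. n \<ge> 1 \<and> p > 0 \<longrightarrow>
            (\<exists>t::real. t \<ge> 0 \<and> t * (1 - exp (- t)) ^ (n - 1) = p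
               \<and> (\<forall>s::real. s \<ge> 0 \<and> s * (1 - exp (- s)) ^ (n - 1) = p \<longrightarrow> s = t)
               \<and> (\<forall>T. is_equilibrium n (\<lambda>_. p) T \<longrightarrow> (\<forall>i<n. T i = ereal t)))"
    using part1 by blast
  show "\<forall>\<^sub>F n in sequentially.
         (\<forall>T. is_equilibrium n (\<lambda>_. 1) T \<longrightarrow>
              revenue n (\<lambda>_. 1) T < 2 * ln (ln (real n)))
       \<and> (let p = ln (real n) * (1 - 1 / real n) ^ (n - 1) in
            (\<forall>T. is_equilibrium n (\<lambda>_. p) T \<longrightarrow>
                 (\<forall>i<n. T i = ereal (ln (real n))) \<and> revenue n (\<lambda>_. p) T = p)
            \<and> p > ln (real n) / 4)"
    using evN
  proof (rule eventually_mono)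
    fix n :: nat assume n: "real n \<ge> exp (exp 1) \<and> n \<ge> 3"
    show "(\<forall>T. is_equilibrium n (\<lambda>_. 1) T \<longrightarrow>
              revenue n (\<lambda>_. 1) T < 2 * ln (ln (real n)))
       \<and> (let p = ln (real n) * (1 - 1 / real n) ^ (n - 1) in
            (\<forall>T. is_equilibrium n (\<lambda>_. p) T \<longrightarrow>
                 (\<forall>i<n. T i = ereal (ln (real n))) \<and> revenue n (\<lambda>_. p) T = p)
            \<and> p > ln (real n) / 4)"
      using part2a[of n] part2b[of n] n by auto
  qed
  show "\<exists>c>0. \<forall>\<^sub>F n in sequentially.
         \<forall>T1 T2. is_equilibrium n (\<lambda>_. 1) T1 \<longrightarrow>
           is_equilibrium n (\<lambda>_. ln (real n) * (1 - 1 / real n) ^ (n - 1)) T2 \<longrightarrow>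
           revenue n (\<lambda>_. ln (real n) * (1 - 1 / real n) ^ (n - 1)) T2
             \<ge> c * (ln (real n) / ln (ln (real n))) * revenue n (\<lambda>_. 1) T1"
  proof (intro exI conjI)
    show "(1/8::real) > 0" by simp
    show "\<forall>\<^sub>F n in sequentially.
         \<forall>T1 T2. is_equilibrium n (\<lambda>_. 1) T1 \<longrightarrow>
           is_equilibrium n (\<lambda>_. ln (real n) * (1 - 1 / real n) ^ (n - 1)) T2 \<longrightarrow>
           revenue n (\<lambda>_. ln (real n) * (1 - 1 / real n) ^ (n - 1)) T2
             \<ge> 1/8 * (ln (real n) / ln (ln (real n))) * revenue n (\<lambda>_. 1) T1"
      using evN
    proof (rule eventually_mono)
      fix n :: nat assume n: "real n \<ge> exp (exp 1) \<and> n \<ge> 3"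
      define L where "L = ln (real n)"
      define p where "p = L * (1 - 1 / real n) ^ (n - 1)"
      have "ln (exp (exp 1)) \<le> L" unfolding L_def using n by (subst ln_le_cancel_iff) auto
      hence L1: "exp 1 \<le> L" by simp
      hence Lpos: "L > 0" by (smt (verit) exp_gt_zero)
      have "ln (exp 1) \<le> ln L" using L1 Lpos by (subst ln_le_cancel_iff) auto
      hence lL: "1 \<le> ln L" by simp
      have b: "p > L / 4" "\<forall>T. is_equilibrium n (\<lambda>_. p) T \<longrightarrow> revenue n (\<lambda>_. p) T = p"
        using part2b[of n] n unfolding Let_def p_def L_def by auto
      show "\<forall>T1 T2. is_equilibrium n (\<lambda>_. 1) T1 \<longrightarrow>
           is_equilibrium n (\<lambda>_. ln (real n) * (1 - 1 / real n) ^ (n - 1)) T2 \<longrightarrow>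
           revenue n (\<lambda>_. ln (real n) * (1 - 1 / real n) ^ (n - 1)) T2
             \<ge> 1/8 * (ln (real n) / ln (ln (real n))) * revenue n (\<lambda>_. 1) T1"
        unfolding L_def[symmetric] p_def[symmetric]
      proof (intro allI impI)
        fix T1 T2 assume E1: "is_equilibrium n (\<lambda>_. 1) T1" and E2: "is_equilibrium n (\<lambda>_. p) T2"
        have r1: "revenue n (\<lambda>_. 1) T1 < 2 * ln L" using part2a[of n T1] n E1 unfolding L_def by auto
        have lLp: "ln L > 0" using lL by linarith
        have pos: "1/8 * (L / ln L) > 0" using mult_pos_pos[OF _ divide_pos_pos[OF Lpos lLp], of "1/8"] by simp
        have "1/8 * (L / ln L) * revenue n (\<lambda>_. 1) T1 \<le> 1/8 * (L / ln L) * (2 * ln L)"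
          using r1 pos by (intro mult_left_mono) auto
        also have "\<dots> = L / 4" using lL by (simp add: field_simps)
        also have "\<dots> < p" using b(1) .
        also have "\<dots> = revenue n (\<lambda>_. p) T2" using b(2) E2 by simp
        finally show "revenue n (\<lambda>_. p) T2 \<ge> 1/8 * (L / ln L) * revenue n (\<lambda>_. 1) T1" by simp
      qed
    qed
  qed
qed

end
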